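(* Let $(\Omega,\mathcal A)$ be a Borel space, $(\Omega,X_\bullet)$ a Borel field of proper metric spaces, and $(F^n_\bullet)_{n\ge1}$ a sequence of Borel subfields such that each $F^n_\omega$ is closed. Then the subfield $\bigcap_n F^n_\bullet$, defined by $\omega\mapsto\bigcap_{n\ge1}F^n_\omega$, is a Borel subfield.
   Context: Borel field of metric spaces: $(X_\omega,d_\omega)_{\omega\in\Omega}$ metric spaces; a section is $x_\bullet=(x_\omega)$, $x_\omega\in X_\omega$. A Borel structure is a set $\mathcal L(\Omega,X_\bullet)$ of sections such that (a) $\omega\mapsto d_\omega(x_\omega,y_\omega)$ is Borel for all $x_\bullet,y_\bullet\in\mathcal L$; (b) any section $y_\bullet$ with $\omega\mapsto d_\omega(x_\omega,y_\omega)$ Borel for all $x_\bullet\in\mathcal L$ lies in $\mathcal L$; (c) there is a countable $\mathcal D=\{x^n_\bullet\}\subseteq\mathcal L$ (fundamental family) with $\{x^n_\omega\}_n$ dense in $X_\omega$ for all $\omega$. For Borel $\Omega'$, $\mathcal L(\Omega',X_\bullet)$ = restrictions to $\Omega'$ of Borel sections. A subfield is $A_\bullet=(A_\omega)$ with $A_\omega\subseteq X_\omega$ (possibly empty); it is Borel if $\Omega'=\{\omega:A_\omega\ne\emptyset\}\in\mathcal A$ and there are countably many $y^n_\bullet\in\mathcal L(\Omega',X_\bullet)$ with $y^n_\omega\in A_\omega$ and $A_\omega\subseteq\overline{\{y^n_\omega\}_n}$ for all $\omega\in\Omega'$. Proper: closed balls are compact. *)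

theory Defs
  imports "HOL-Analysis.Analysis"
begin

definition is_section :: "'w measure \<Rightarrow> ('w \<Rightarrow> 'a metric) \<Rightarrow> ('w \<Rightarrow> 'a) \<Rightarrow> bool" where
  "is_section M X x \<longleftrightarrow> (\<forall>w\<in>space M. x w \<in> mspace (X w))"

definition dist_fun :: "('w \<Rightarrow> 'a metric) \<Rightarrow> ('w \<Rightarrow> 'a) \<Rightarrow> ('w \<Rightarrow> 'a) \<Rightarrow> 'w \<Rightarrow> real" where
  "dist_fun X x y = (\<lambda>w. mdist (X w) (x w) (y w))"

definition borel_structure ::
  "'w measure \<Rightarrow> ('w \<Rightarrow> 'a metric) \<Rightarrow> ('w \<Rightarrow> 'a) set \<Rightarrow> bool" where
  "borel_structure M X L \<longleftrightarrow>
     (\<forall>x\<in>L. is_section M X x) \<and>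
     (\<forall>x\<in>L. \<forall>y\<in>L. dist_fun X x y \<in> borel_measurable M) \<and>
     (\<forall>y. is_section M X y \<and> (\<forall>x\<in>L. dist_fun X x y \<in> borel_measurable M) \<longrightarrow> y \<in> L) \<and>
     (\<exists>D. countable D \<and> D \<subseteq> L \<and>
        (\<forall>w\<in>space M. mtopology_of (X w) closure_of {x w |x. x \<in> D} = mspace (X w)))"

definition proper_metric :: "'a metric \<Rightarrow> bool" where
  "proper_metric m \<longleftrightarrow> (\<forall>x\<in>mspace m. \<forall>r. compactin (mtopology_of m) (mcball_of m x r))"

definition borel_subfield ::
  "'w measure \<Rightarrow> ('w \<Rightarrow> 'a metric) \<Rightarrow> ('w \<Rightarrow> 'a) set \<Rightarrow> ('w \<Rightarrow> 'a set) \<Rightarrow> bool" where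
  "borel_subfield M X L A \<longleftrightarrow>
     (\<forall>w\<in>space M. A w \<subseteq> mspace (X w)) \<and>
     (let \<Omega>' = {w\<in>space M. A w \<noteq> {}} in
       \<Omega>' \<in> sets M \<and>
       (\<exists>Y. countable Y \<and>
          (\<forall>y\<in>Y. \<exists>x\<in>L. \<forall>w\<in>\<Omega>'. y w = x w) \<and>
          (\<forall>w\<in>\<Omega>'. (\<forall>y\<in>Y. y w \<in> A w) \<and>
                   A w \<subseteq> mtopology_of (X w) closure_of {y w |y. y \<in> Y})))"

end

theory Submission
  imports Defs
begin


lemma (in Metric_space) char_inter:
  fixes F :: "nat \<Rightarrow> 'a set" and Y :: "nat \<Rightarrow> nat \<Rightarrow> 'a" and D :: "nat \<Rightarrow> 'a"
  assumes prp: "\<And>x r. x \<in> M \<Longrightarrow> compactin mtopology (mcball x r)"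
   and cl: "\<And>n. closedin mtopology (F n)"
   and Yin: "\<And>n i. F n \<noteq> {} \<Longrightarrow> Y n i \<in> F n"
   and Yd: "\<And>n. F n \<subseteq> mtopology closure_of range (Y n)"
   and Din: "range D \<subseteq> M" and Dd: "M \<subseteq> mtopology closure_of range D"
   and c: "c \<in> M"
  shows "(\<Inter>n. F n) \<inter> mcball c r \<noteq> {} \<longleftrightarrow>
     (\<forall>j. \<exists>k. d (D k) c < r + 1/Suc j \<and> (\<forall>n\<in>{..j}. F n \<noteq> {} \<and> (\<exists>i. d (D k) (Y n i) < 1/Suc j)))"
proof
  assume "(\<Inter>n. F n) \<inter> mcball c r \<noteq> {}"
  then obtain q where q: "\<And>n. q \<in> F n" "q \<in> mcball c r" by blast
  have qM: "q \<in> M" using q(2) by auto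
  show "\<forall>j. \<exists>k. d (D k) c < r + 1/Suc j \<and> (\<forall>n\<in>{..j}. F n \<noteq> {} \<and> (\<exists>i. d (D k) (Y n i) < 1/Suc j))"
  proof
    fix j
    define e where "e = 1/(2 * Suc j)"
    have e: "e > 0" "2*e = 1/Suc j" by (auto simp: e_def field_simps)
    obtain k where k: "d q (D k) < e"
      using Dd qM e(1) unfolding metric_closure_of by fastforce
    have "\<exists>i. d (D k) (Y n i) < 1/Suc j" if "n \<le> j" for n
    proof -
      obtain i where "d q (Y n i) < e"
        using Yd[of n] q(1)[of n] e(1) unfolding metric_closure_of by fastforce
      moreover have "Y n i \<in> M" "D k \<in> M" using Yin[of n i] q(1)[of n] closedin_subset[OF cl[of n]] Din by auto
      ultimately have "d (D k) (Y n i) < 2*e"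
        using k triangle[of "D k" q "Y n i"] qM commute[of q "D k"] by linarith
      then show ?thesis using e by auto
    qed
    moreover have "d (D k) c < r + 1/Suc j"
    proof -
      have "D k \<in> M" using Din by auto
      then have "d (D k) c \<le> d (D k) q + d q c" using triangle qM c by blast
      moreover have "d q c \<le> r" using q(2) commute c qM by auto
      ultimately show ?thesis using k commute[of q "D k"] e by simp
    qed
    ultimately show "\<exists>k. d (D k) c < r + 1/Suc j \<and> (\<forall>n\<in>{..j}. F n \<noteq> {} \<and> (\<exists>i. d (D k) (Y n i) < 1/Suc j))"
      using q(1) by blast
  qed
next
  assume H: "\<forall>j. \<exists>k. d (D k) c < r + 1/Suc j \<and> (\<forall>n\<in>{..j}. F n \<noteq> {} \<and> (\<exists>i. d (D k) (Y n i) < 1/Suc j))"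
  then obtain k where k: "\<And>j. d (D (k j)) c < r + 1/Suc j"
     "\<And>j n. n \<le> j \<Longrightarrow> F n \<noteq> {} \<and> (\<exists>i. d (D (k j)) (Y n i) < 1/Suc j)"
    by (metis atMost_iff)
  define \<sigma> where "\<sigma> = (\<lambda>j. D (k j))"
  have \<sigma>M: "\<sigma> j \<in> M" for j using Din by (auto simp: \<sigma>_def)
  have "range \<sigma> \<subseteq> mcball c (r+1)"
  proof clarify
    fix j
    have "1/Suc j \<le> (1::real)" by auto
    then have "d (D (k j)) c \<le> r+1" using k(1)[of j] by linarith
    then show "\<sigma> j \<in> mcball c (r+1)" using \<sigma>M c commute[of c "\<sigma> j"] by (auto simp: \<sigma>_def)
  qed
  then obtain l \<rho> where l: "l \<in> mcball c (r+1)" "strict_mono \<rho>" "limitin mtopology (\<sigma> \<circ> \<rho>) l sequentially"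
    using prp[OF c, of "r+1"] unfolding compactin_sequentially by blast
  have lM: "l \<in> M" using l(1) by auto
  have close: "\<exists>j\<ge>N. d (\<sigma> (\<rho> j)) l < \<epsilon> \<and> 1/Suc (\<rho> j) < \<epsilon>" if "\<epsilon> > 0" for \<epsilon> N
  proof -
    have "eventually (\<lambda>j. (\<sigma>\<circ>\<rho>) j \<in> M \<and> d ((\<sigma>\<circ>\<rho>) j) l < \<epsilon>) sequentially"
      using l(3) that unfolding limitin_metric by blast
    then obtain N1 where N1: "\<And>j. j \<ge> N1 \<Longrightarrow> d (\<sigma> (\<rho> j)) l < \<epsilon>"
      unfolding eventually_sequentially by auto
    obtain N2 where N2: "1/Suc N2 < \<epsilon>" using nat_approx_posE \<open>\<epsilon> > 0\<close> by blast
    define j where "j = max N (max N1 N2)"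
    have "\<rho> j \<ge> j" using l(2) by (simp add: seq_suble)
    hence "1/Suc (\<rho> j) \<le> 1/Suc N2" unfolding j_def by (simp add: frac_le)
    moreover have "j \<ge> N" "j \<ge> N1" unfolding j_def by auto
    ultimately show ?thesis using N1[of j] N2 by (meson order_le_less_trans)
  qed
  have "l \<in> mcball c r"
  proof (rule ccontr)
    assume "l \<notin> mcball c r"
    then have gt: "d c l > r" using lM c by auto
    obtain j where j: "d (\<sigma> (\<rho> j)) l < (d c l - r)/2" "1/Suc (\<rho> j) < (d c l - r)/2"
      using close[of "(d c l - r)/2" 0] gt by auto
    have "d c l \<le> d c (\<sigma> (\<rho> j)) + d (\<sigma> (\<rho> j)) l" using triangle c \<sigma>M lM by blast
    moreover have "d c (\<sigma> (\<rho> j)) < r + 1/Suc (\<rho> j)" using k(1)[of "\<rho> j"] commute[of c] \<sigma>M c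
      by (simp add: \<sigma>_def)
    ultimately have A: "d c l < r + 1/Suc (\<rho> j) + (d c l - r)/2" using j(1) by linarith
    show False using A j(2) by (simp add: field_simps)
  qed
  moreover have "l \<in> F n" for n
  proof -
    have "l \<in> mtopology closure_of F n"
      unfolding metric_closure_of
    proof (clarsimp simp: lM)
      fix \<epsilon> :: real assume e: "\<epsilon> > 0"
      obtain j where j: "j \<ge> n" "d (\<sigma> (\<rho> j)) l < \<epsilon>/2" "1/Suc (\<rho> j) < \<epsilon>/2"
        using close[of "\<epsilon>/2" n] e by auto
      have "\<rho> j \<ge> j" using l(2) by (simp add: seq_suble)
      then obtain i where i: "F n \<noteq> {}" "d (D (k (\<rho> j))) (Y n i) < 1/Suc (\<rho> j)"
        using k(2)[of n "\<rho> j"] j(1) by auto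
      have Y: "Y n i \<in> F n" using Yin i(1) by auto
      hence YM: "Y n i \<in> M" using closedin_subset[OF cl[of n]] by auto
      have "d l (Y n i) \<le> d l (\<sigma> (\<rho> j)) + d (\<sigma> (\<rho> j)) (Y n i)" using triangle lM \<sigma>M YM by blast
      then have "d l (Y n i) < \<epsilon>" using i(2) j commute[of l "\<sigma> (\<rho> j)"] by (simp add: \<sigma>_def)
      then show "\<exists>y\<in>F n. y \<in> M \<and> d l y < \<epsilon>" using Y YM by blast
    qed
    then show ?thesis using closure_of_closedin[OF cl[of n]] by simp
  qed
  ultimately show "(\<Inter>n. F n) \<inter> mcball c r \<noteq> {}" by blast
qed



lemma (in Metric_space) selection:
  fixes T :: "'a set" and D :: "nat \<Rightarrow> 'a" and kk :: "nat \<Rightarrow> nat"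
  assumes prp: "\<And>x r. x \<in> M \<Longrightarrow> compactin mtopology (mcball x r)"
   and cl: "closedin mtopology T"
   and Din: "range D \<subseteq> M" and Dd: "M \<subseteq> mtopology closure_of range D"
   and rho: "\<rho> > 0"
   and start: "T \<inter> mball (D (kk 0)) \<rho> \<noteq> {}"
   and step: "\<And>j. kk (Suc j) = (LEAST k. T \<inter> mball (D k) (\<rho>/2^Suc j) \<noteq> {} \<and> d (D k) (D (kk j)) < 2*\<rho>/2^j)"
  shows "\<exists>p\<in>T. limitin mtopology (\<lambda>j. D (kk j)) p sequentially \<and> d (D (kk 0)) p \<le> 4*\<rho>"
proof -
  define z where "z = (\<lambda>j. D (kk j))"
  have zM: "z j \<in> M" for j using Din by (auto simp: z_def)
  have TM: "T \<subseteq> M" using closedin_subset[OF cl] by simp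
  have stp: "d (z (Suc j)) (z j) < 2*\<rho>/2^j \<and> T \<inter> mball (z (Suc j)) (\<rho>/2^Suc j) \<noteq> {}"
    if H: "T \<inter> mball (z j) (\<rho>/2^j) \<noteq> {}" for j
  proof -
    obtain t where t: "t \<in> T" "d (z j) t < \<rho>/2^j" using H by auto
    have tM: "t \<in> M" using t TM by auto
    have pos: "\<rho>/2^Suc j > 0" using rho by simp
    obtain k where k: "d t (D k) < \<rho>/2^Suc j"
      using Dd tM pos unfolding metric_closure_of by fastforce
    have DkM: "D k \<in> M" using Din by auto
    have "T \<inter> mball (D k) (\<rho>/2^Suc j) \<noteq> {}" using t tM DkM k commute[of t "D k"] by auto
    moreover have "d (D k) (D (kk j)) < 2*\<rho>/2^j"
    proof -
      have "d (D k) (z j) \<le> d (D k) t + d t (z j)" using triangle DkM tM zM by blast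
      moreover have "\<rho>/2^Suc j \<le> \<rho>/2^j" using rho by (simp add: frac_le)
      ultimately show ?thesis using k t(2) commute[of t "D k"] commute[of t "z j"] zM tM DkM
        by (simp add: z_def)
    qed
    ultimately have "\<exists>k. T \<inter> mball (D k) (\<rho>/2^Suc j) \<noteq> {} \<and> d (D k) (D (kk j)) < 2*\<rho>/2^j" by blast
    from LeastI_ex[OF this] show ?thesis unfolding step[of j, symmetric] z_def by simp
  qed
  have P: "T \<inter> mball (z j) (\<rho>/2^j) \<noteq> {}" for j
  proof (induction j)
    case 0 then show ?case using start by (simp add: z_def)
  next
    case (Suc j) then show ?case using stp by blast
  qed
  have dz: "d (z m) (z (m + i)) \<le> 4*\<rho>/2^m - 4*\<rho>/2^(m+i)" for m i
  proof (induction i)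
    case 0 then show ?case using zM by simp
  next
    case (Suc i)
    have "d (z m) (z (m + Suc i)) \<le> d (z m) (z (m+i)) + d (z (m+i)) (z (Suc (m+i)))"
      using triangle zM by simp
    moreover have "d (z (m+i)) (z (Suc (m+i))) < 2*\<rho>/2^(m+i)"
      using stp[OF P[of "m+i"]] commute zM by simp
    moreover have "4*\<rho>/2^(m+i) - 2*\<rho>/2^(m+i) = 4*\<rho>/2^(m + Suc i)" by (simp add: field_simps)
    ultimately show ?case using Suc.IH by simp
  qed
  have small: "\<exists>N. \<rho>/2^N < e" if "e > 0" for e
  proof -
    obtain N where "(1/2::real)^N < e/\<rho>" using real_arch_pow_inv[of "e/\<rho>" "1/2"] \<open>e > 0\<close> rho by (auto simp: divide_pos_pos)
    then show ?thesis using rho by (auto simp: field_simps power_divide)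
  qed
  have cau: "MCauchy z"
    unfolding MCauchy_def
  proof (intro conjI allI impI)
    show "range z \<subseteq> M" using zM by auto
    fix e :: real assume e: "e > 0"
    obtain N where N: "\<rho>/2^N < e/4" using small[of "e/4"] e by auto
    have "d (z n) (z n') < e" if "N \<le> n" "N \<le> n'" for n n'
    proof -
      have b: "d (z m) (z n'') \<le> 4*\<rho>/2^m" if "m \<le> n''" for m n''
      proof -
        have "4*\<rho>/2^n'' \<ge> 0" using rho by simp
        then show ?thesis using dz[of m "n'' - m"] that by simp
      qed
      have "4*\<rho>/2^n \<le> 4*\<rho>/2^N" "4*\<rho>/2^n' \<le> 4*\<rho>/2^N" using that rho
        by (simp_all add: frac_le)
      moreover have "4*\<rho>/2^N < e" using N by (simp add: mult.commute)
      ultimately show ?thesis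
      proof (cases "n \<le> n'")
        case True then show ?thesis using b[of n n'] \<open>4*\<rho>/2^n \<le> 4*\<rho>/2^N\<close> \<open>4*\<rho>/2^N < e\<close> by linarith
      next
        case False then show ?thesis using b[of n' n] commute[of "z n" "z n'"] zM
           \<open>4*\<rho>/2^n' \<le> 4*\<rho>/2^N\<close> \<open>4*\<rho>/2^N < e\<close> by simp
      qed
    qed
    then show "\<exists>N. \<forall>n n'. N \<le> n \<longrightarrow> N \<le> n' \<longrightarrow> d (z n) (z n') < e" by blast
  qed
  have "range z \<subseteq> mcball (z 0) (4*\<rho>)"
  proof clarify
    fix i
    have "4*\<rho>/2^i \<ge> 0" using rho by simp
    then have "d (z 0) (z i) \<le> 4*\<rho>" using dz[of 0 i] by simp
    then show "z i \<in> mcball (z 0) (4*\<rho>)" using zM by auto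
  qed
  then obtain l r where l: "l \<in> mcball (z 0) (4*\<rho>)" "strict_mono r" "limitin mtopology (z \<circ> r) l sequentially"
    using prp[OF zM, of 0 "4*\<rho>"] unfolding compactin_sequentially by blast
  have lim: "limitin mtopology z l sequentially"
    using MCauchy_convergent_subsequence[OF cau l(2,3)] .
  have lM: "l \<in> M" using l(1) by auto
  have "l \<in> T"
  proof -
    have "l \<in> mtopology closure_of T"
      unfolding metric_closure_of
    proof (clarsimp simp: lM)
      fix e :: real assume e: "e > 0"
      have "eventually (\<lambda>j. z j \<in> M \<and> d (z j) l < e/2) sequentially"
        using lim e unfolding limitin_metric by (meson half_gt_zero)
      then obtain N1 where N1: "\<And>j. j \<ge> N1 \<Longrightarrow> d (z j) l < e/2"
        unfolding eventually_sequentially by auto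
      obtain N2 where N2: "\<rho>/2^N2 < e/2" using small[of "e/2"] e by auto
      define j where "j = max N1 N2"
      have "\<rho>/2^j \<le> \<rho>/2^N2" using rho by (simp add: frac_le j_def)
      obtain t where t: "t \<in> T" "d (z j) t < \<rho>/2^j" using P[of j] by auto
      have tM: "t \<in> M" using t TM by auto
      have "d l t \<le> d l (z j) + d (z j) t" using triangle lM zM tM by blast
      moreover have "d (z j) l < e/2" using N1[of j] by (simp add: j_def)
      ultimately have "d l t < e" using t(2) \<open>\<rho>/2^j \<le> \<rho>/2^N2\<close> N2 commute[of l "z j"] lM zM
        by linarith
      then show "\<exists>y\<in>T. y \<in> M \<and> d l y < e" using t tM by blast
    qed
    then show ?thesis using closure_of_closedin[OF cl] by simp
  qed
  moreover have "d (D (kk 0)) l \<le> 4*\<rho>" using l(1) by (simp add: z_def)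
  ultimately show ?thesis using lim unfolding z_def by blast
qed

lemma (in Metric_space) limitin_dist:
  assumes lim: "limitin mtopology z p sequentially" and a: "a \<in> M"
  shows "(\<lambda>j. d a (z j)) \<longlonglongrightarrow> d a p"
proof -
  have pM: "p \<in> M" and ev: "eventually (\<lambda>j. z j \<in> M) sequentially" and tz: "(\<lambda>j. d (z j) p) \<longlonglongrightarrow> 0"
    using lim unfolding limitin_metric_dist_null by auto
  have "eventually (\<lambda>j. norm (d a (z j) - d a p) \<le> d (z j) p) sequentially"
    using ev
  proof (rule eventually_mono)
    fix j assume zj: "z j \<in> M"
    have "d a (z j) \<le> d a p + d p (z j)" "d a p \<le> d a (z j) + d (z j) p"
      using triangle a pM zj by blast+
    then show "norm (d a (z j) - d a p) \<le> d (z j) p" using commute[of p "z j"] by auto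
  qed
  then have "(\<lambda>j. d a (z j) - d a p) \<longlonglongrightarrow> 0" by (rule Lim_null_comparison) (rule tz)
  then show ?thesis by (rule LIM_zero_cancel)
qed



fun kseq :: "('w \<Rightarrow> nat) \<Rightarrow> (nat \<Rightarrow> real \<Rightarrow> 'w \<Rightarrow> bool) \<Rightarrow> ('w \<Rightarrow> 'a metric) \<Rightarrow> (nat \<Rightarrow> 'w \<Rightarrow> 'a) \<Rightarrow> real \<Rightarrow> nat \<Rightarrow> 'w \<Rightarrow> nat"
  where
  "kseq k0 P X dd \<rho> 0 w = k0 w"
| "kseq k0 P X dd \<rho> (Suc j) w =
     (LEAST k. P k (\<rho>/2^Suc j) w \<and> mdist (X w) (dd k w) (dd (kseq k0 P X dd \<rho> j w) w) < 2*\<rho>/2^j)"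

lemma kseq_meas:
  assumes k0: "k0 \<in> M \<rightarrow>\<^sub>M count_space UNIV"
    and P: "\<And>k r. Measurable.pred M (P k r)"
    and D: "\<And>k k'. dist_fun X (dd k) (dd k') \<in> borel_measurable M"
  shows "kseq k0 P X dd \<rho> j \<in> M \<rightarrow>\<^sub>M count_space UNIV"
proof (induction j)
  case 0 then show ?case using k0 by simp
next
  case (Suc j)
  have "Measurable.pred M (\<lambda>w. P i (\<rho>/2^Suc j) w \<and> mdist (X w) (dd i w) (dd (kseq k0 P X dd \<rho> j w) w) < 2*\<rho>/2^j)" for i
  proof -
    have "Measurable.pred M (\<lambda>w. (\<lambda>k' w. dist_fun X (dd i) (dd k') w < 2*\<rho>/2^j) (kseq k0 P X dd \<rho> j w) w)"
      by (rule measurable_compose_countable[OF _ Suc.IH]) (use D in measurable)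
    then show ?thesis using P by (simp add: dist_fun_def)
  qed
  then show ?case by (simp del: power_Suc)
qed

lemma trivial_subfield:
  assumes "\<forall>w\<in>space M. A w = {}" shows "borel_subfield M X L A"
proof -
  have E: "{w \<in> space M. A w \<noteq> {}} = {}" using assms by auto
  show ?thesis unfolding borel_subfield_def Let_def E using assms by (auto intro!: exI[of _ "{}"])
qed



theorem mainTheorem7:
  fixes M :: "'w measure" and X :: "'w \<Rightarrow> 'a metric"
    and L :: "('w \<Rightarrow> 'a) set" and F :: "nat \<Rightarrow> 'w \<Rightarrow> 'a set"
  assumes "borel_structure M X L"
    and "\<forall>w\<in>space M. proper_metric (X w)"
    and "\<forall>n. borel_subfield M X L (F n)"
    and "\<forall>n. \<forall>w\<in>space M. closedin (mtopology_of (X w)) (F n w)"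
  shows "borel_subfield M X L (\<lambda>w. \<Inter>n. F n w)"
proof -
  note BS = assms(1)[unfolded borel_structure_def]
  have Lsec: "\<And>x. x\<in>L \<Longrightarrow> is_section M X x" using BS by blast
  have Ldist: "\<And>x y. x\<in>L \<Longrightarrow> y\<in>L \<Longrightarrow> dist_fun X x y \<in> borel_measurable M" using BS by blast
  have Lclosed: "\<And>y. is_section M X y \<Longrightarrow> (\<forall>x\<in>L. dist_fun X x y \<in> borel_measurable M) \<Longrightarrow> y \<in> L"
    using BS by blast
  obtain D0 where D0: "countable D0" "D0 \<subseteq> L"
    "\<And>w. w\<in>space M \<Longrightarrow> mtopology_of (X w) closure_of {x w|x. x\<in>D0} = mspace (X w)"
    using BS by blast
  define G where "G = (\<lambda>w. \<Inter>n. F n w)"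
  define Om where "Om = (\<lambda>n. {w\<in>space M. F n w \<noteq> {}})"
  have bsf: "(\<forall>w\<in>space M. F n w \<subseteq> mspace (X w)) \<and> Om n \<in> sets M \<and>
     (\<exists>Y. countable Y \<and> (\<forall>y\<in>Y. \<exists>x\<in>L. \<forall>w\<in>Om n. y w = x w) \<and>
          (\<forall>w\<in>Om n. (\<forall>y\<in>Y. y w \<in> F n w) \<and> F n w \<subseteq> mtopology_of (X w) closure_of {y w |y. y \<in> Y}))" for n
    using spec[OF assms(3), of n] unfolding borel_subfield_def Let_def Om_def by assumption
  have Fsub: "\<And>n w. w\<in>space M \<Longrightarrow> F n w \<subseteq> mspace (X w)"
    using bsf by blast
  have OmM: "Om n \<in> sets M" for n
    using bsf by blast
  have "\<forall>n. \<exists>Y. countable Y \<and> (\<forall>y\<in>Y. \<exists>x\<in>L. \<forall>w\<in>Om n. y w = x w) \<and>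
          (\<forall>w\<in>Om n. (\<forall>y\<in>Y. y w \<in> F n w) \<and> F n w \<subseteq> mtopology_of (X w) closure_of {y w |y. y \<in> Y})"
    using bsf by blast
  from choice[OF this] obtain YY where YYa: "\<forall>n. countable (YY n) \<and> (\<forall>y\<in>YY n. \<exists>x\<in>L. \<forall>w\<in>Om n. y w = x w) \<and>
          (\<forall>w\<in>Om n. (\<forall>y\<in>YY n. y w \<in> F n w) \<and> F n w \<subseteq> mtopology_of (X w) closure_of {y w |y. y \<in> YY n})"
    by blast
  have YY: "\<And>n. countable (YY n)" "\<And>n. \<forall>y\<in>YY n. \<exists>x\<in>L. \<forall>w\<in>Om n. y w = x w"
     "\<And>n w. w\<in>Om n \<Longrightarrow> (\<forall>y\<in>YY n. y w \<in> F n w) \<and> F n w \<subseteq> mtopology_of (X w) closure_of {y w |y. y \<in> YY n}"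
    using YYa by blast+
  show ?thesis
  proof (cases "D0 = {} \<or> (\<exists>n. YY n = {})")
    case True
    have "\<forall>w\<in>space M. G w = {}"
    proof
      fix w assume w: "w \<in> space M"
      show "G w = {}"
      proof (cases "D0 = {}")
        case True
        then have "mspace (X w) = {}" using D0(3)[OF w] by simp
        then show ?thesis using Fsub[OF w, of 0] unfolding G_def by blast
      next
        case False
        then obtain n where n: "YY n = {}" using \<open>D0 = {} \<or> (\<exists>n. YY n = {})\<close> by blast
        have "F n w = {}"
        proof (rule ccontr)
          assume "F n w \<noteq> {}"
          then have "w \<in> Om n" using w by (simp add: Om_def)
          then show False using YY(3)[of w n] n \<open>F n w \<noteq> {}\<close> by simp
        qed
        then show ?thesis unfolding G_def by blast
      qed
    qed
    then have "borel_subfield M X L G" by (rule trivial_subfield)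
    then show ?thesis unfolding G_def .
  next
    case False
    then have D0ne: "D0 \<noteq> {}" and YYne: "\<And>n. YY n \<noteq> {}" by auto
    define dd where "dd = from_nat_into D0"
    have rdd: "range dd = D0" using D0ne D0(1) by (simp add: dd_def)
    have ddL: "dd k \<in> L" for k using rdd D0(2) by auto
    define yy where "yy = (\<lambda>n. from_nat_into (YY n))"
    have yyY: "yy n i \<in> YY n" for n i using YYne by (simp add: yy_def from_nat_into)
    have ryy: "range (yy n) = YY n" for n using YYne YY(1) by (simp add: yy_def)
    define ll where "ll = (\<lambda>n i. SOME x. x \<in> L \<and> (\<forall>w\<in>Om n. yy n i w = x w))"
    have ll: "ll n i \<in> L \<and> (\<forall>w\<in>Om n. yy n i w = ll n i w)" for n i
    proof -
      have "\<exists>x. x \<in> L \<and> (\<forall>w\<in>Om n. yy n i w = x w)" using YY(2)[of n] yyY[of n i] by blast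
      then show ?thesis unfolding ll_def by (rule someI_ex)
    qed
    have prp: "\<And>x r. x \<in> mspace (X w) \<Longrightarrow> compactin (Metric_space.mtopology (mspace (X w)) (mdist (X w))) (Metric_space.mcball (mspace (X w)) (mdist (X w)) x r)" if "w \<in> space M" for w
      using assms(2) that unfolding proper_metric_def mtopology_of_def mcball_of_def by blast
    have clF: "closedin (Metric_space.mtopology (mspace (X w)) (mdist (X w))) (F n w)" if "w\<in>space M" for w n
      using assms(4) that unfolding mtopology_of_def by blast
    have ddM: "dd k w \<in> mspace (X w)" if "w\<in>space M" for k w using Lsec[OF ddL] that unfolding is_section_def by blast
    have ddD: "mspace (X w) \<subseteq> Metric_space.mtopology (mspace (X w)) (mdist (X w)) closure_of range (\<lambda>k. dd k w)" if "w\<in>space M" for w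
    proof -
      have "{x w|x. x\<in>D0} = range (\<lambda>k. dd k w)" unfolding rdd[symmetric] by auto
      then show ?thesis using D0(3)[OF that] unfolding mtopology_of_def by simp
    qed
    have llF: "ll n i w \<in> F n w" if "w \<in> space M" "F n w \<noteq> {}" for n i w
    proof -
      have "w \<in> Om n" using that by (simp add: Om_def)
      then show ?thesis using ll[of n i] YY(3)[of w n] yyY[of n i] by auto
    qed
    have llD: "F n w \<subseteq> Metric_space.mtopology (mspace (X w)) (mdist (X w)) closure_of range (\<lambda>i. ll n i w)" if "w\<in>space M" for n w
    proof (cases "F n w = {}")
      case True then show ?thesis by simp
    next
      case False
      then have wO: "w \<in> Om n" using that by (simp add: Om_def)
      have "{y w |y. y \<in> YY n} = range (\<lambda>i. yy n i w)" unfolding ryy[of n, symmetric] by auto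
      also have "\<dots> = range (\<lambda>i. ll n i w)" using ll[of n] wO by auto
      finally show ?thesis using YY(3)[OF wO] unfolding mtopology_of_def by simp
    qed
    define CB where "CB = (\<lambda>c r w. \<forall>j. \<exists>k. dist_fun X (dd k) c w < r + 1/Suc j \<and> (\<forall>n\<in>{..j}. w \<in> Om n \<and> (\<exists>i. dist_fun X (dd k) (ll n i) w < 1/Suc j)))"
    have CBchar: "CB c r w \<longleftrightarrow> G w \<inter> mcball_of (X w) (c w) r \<noteq> {}" if "w \<in> space M" "c w \<in> mspace (X w)" for c r w
    proof -
      have *: "(w \<in> Om n) = (F n w \<noteq> {})" for n using that(1) by (simp add: Om_def)
      have rD: "range (\<lambda>k. dd k w) \<subseteq> mspace (X w)" using ddM[OF that(1)] by auto
      have "(\<Inter>n. F n w) \<inter> Metric_space.mcball (mspace (X w)) (mdist (X w)) (c w) r \<noteq> {} \<longleftrightarrow>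
          (\<forall>j. \<exists>k. mdist (X w) (dd k w) (c w) < r + 1/Suc j \<and> (\<forall>n\<in>{..j}. F n w \<noteq> {} \<and> (\<exists>i. mdist (X w) (dd k w) (ll n i w) < 1/Suc j)))"
        by (rule Metric_space.char_inter[OF Metric_space_mspace_mdist, where F="\<lambda>n. F n w" and Y = "\<lambda>n i. ll n i w" and D="\<lambda>k. dd k w"])
          (use prp[OF that(1)] clF[OF that(1)] llF[OF that(1)] llD[OF that(1)] rD ddD[OF that(1)] that(2) in auto)
      then show ?thesis
        unfolding CB_def G_def dist_fun_def mcball_of_def * by simp
    qed
    have CBm: "Measurable.pred M (CB c r)" if "c \<in> L" for c r
    proof -
      have [measurable]: "dist_fun X (dd k) c \<in> borel_measurable M" for k using Ldist ddL that by blast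
      have [measurable]: "dist_fun X (dd k) (ll n i) \<in> borel_measurable M" for k n i using Ldist ddL ll by blast
      have [measurable]: "Om n \<in> sets M" for n by (rule OmM)
      show ?thesis unfolding CB_def by measurable
    qed
    define P where "P = (\<lambda>k r w. \<exists>q. CB (dd k) (r - 1/Suc q) w)"
    have Pchar: "P k \<rho> w \<longleftrightarrow> G w \<inter> mball_of (X w) (dd k w) \<rho> \<noteq> {}" if w: "w \<in> space M" for k \<rho> w
    proof
      assume "P k \<rho> w"
      then obtain q where "CB (dd k) (\<rho> - 1/Suc q) w" unfolding P_def by blast
      then obtain t where t: "t \<in> G w" "t \<in> mcball_of (X w) (dd k w) (\<rho> - 1/Suc q)"
        using CBchar[of w "dd k", OF w ddM[OF w]] by blast
      have "1/Suc q > (0::real)" by simp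
      moreover have "mdist (X w) (dd k w) t \<le> \<rho> - 1/Suc q" "dd k w \<in> mspace (X w)" "t \<in> mspace (X w)" using t(2) by auto
      ultimately have "mdist (X w) (dd k w) t < \<rho>" by linarith
      then have "t \<in> mball_of (X w) (dd k w) \<rho>" using t(2) by simp
      then show "G w \<inter> mball_of (X w) (dd k w) \<rho> \<noteq> {}" using t(1) by blast
    next
      assume "G w \<inter> mball_of (X w) (dd k w) \<rho> \<noteq> {}"
      then obtain t where t: "t \<in> G w" "t \<in> mball_of (X w) (dd k w) \<rho>" by blast
      then have "\<rho> - mdist (X w) (dd k w) t > 0" by auto
      then obtain q where q: "1/Suc q < \<rho> - mdist (X w) (dd k w) t" using nat_approx_posE by blast
      have "t \<in> mcball_of (X w) (dd k w) (\<rho> - 1/Suc q)" using t(2) q by auto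
      then have "CB (dd k) (\<rho> - 1/Suc q) w" using CBchar[of w "dd k", OF w ddM[OF w]] t(1) by blast
      then show "P k \<rho> w" unfolding P_def by blast
    qed
    have Pm: "Measurable.pred M (P k r)" for k r
    proof -
      have [measurable]: "Measurable.pred M (CB (dd k) s)" for s using CBm[OF ddL] .
      show ?thesis unfolding P_def by measurable
    qed
    have Pex: "\<exists>k. P k r w" if w: "w \<in> space M" and Gne: "G w \<noteq> {}" and r: "r > 0" for w r
    proof -
      obtain t where t: "t \<in> G w" using Gne by blast
      have tM: "t \<in> mspace (X w)" using t Fsub[OF w, of 0] unfolding G_def by blast
      then have "t \<in> Metric_space.mtopology (mspace (X w)) (mdist (X w)) closure_of range (\<lambda>k. dd k w)"
        using ddD[OF w] by blast
      then have "\<exists>y\<in>range (\<lambda>k. dd k w). y \<in> Metric_space.mball (mspace (X w)) (mdist (X w)) t r"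
        unfolding Metric_space.metric_closure_of[OF Metric_space_mspace_mdist] using r by simp
      then obtain k where "mdist (X w) t (dd k w) < r"
        by (auto simp: Metric_space.in_mball[OF Metric_space_mspace_mdist])
      then have "t \<in> mball_of (X w) (dd k w) r" using tM ddM[OF w] by (simp add: mdist_commute)
      then show ?thesis using Pchar[OF w] t by blast
    qed
    define Om' where "Om' = {w\<in>space M. G w \<noteq> {}}"
    have Om'P: "Om' = {w\<in>space M. \<exists>k. P k 1 w}"
    proof -
      have "G w \<noteq> {} \<longleftrightarrow> (\<exists>k. P k 1 w)" if w: "w \<in> space M" for w
      proof
        assume "G w \<noteq> {}"
        then obtain t where t: "t \<in> G w" by blast
        have tM: "t \<in> mspace (X w)" using t Fsub[OF w, of 0] unfolding G_def by blast
        then have "t \<in> Metric_space.mtopology (mspace (X w)) (mdist (X w)) closure_of range (\<lambda>k. dd k w)"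
          using ddD[OF w] by blast
        then have "\<exists>y\<in>range (\<lambda>k. dd k w). y \<in> Metric_space.mball (mspace (X w)) (mdist (X w)) t 1"
          unfolding Metric_space.metric_closure_of[OF Metric_space_mspace_mdist] by simp
        then obtain k where "mdist (X w) t (dd k w) < 1"
          by (auto simp: Metric_space.in_mball[OF Metric_space_mspace_mdist])
        then have "t \<in> mball_of (X w) (dd k w) 1" using tM ddM[OF w] by (simp add: mdist_commute)
        then show "\<exists>k. P k 1 w" using Pchar[OF w] t by blast
      next
        assume "\<exists>k. P k 1 w" then show "G w \<noteq> {}" using Pchar[OF w] by blast
      qed
      then show ?thesis unfolding Om'_def by blast
    qed
    have Om'M: "Om' \<in> sets M"
    proof -
      have [measurable]: "Measurable.pred M (P k 1)" for k using Pm .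
      have "{w\<in>space M. \<exists>k. P k 1 w} \<in> sets M" by measurable
      then show ?thesis using Om'P by simp
    qed
    define rho where "rho = (\<lambda>m::nat. 1/real (Suc m))"
    have rho_pos: "rho m > 0" for m by (simp add: rho_def)
    define k0 where "k0 = (\<lambda>k m w. if P k (rho m) w then k else LEAST k'. P k' (rho m) w)"
    define kq where "kq = (\<lambda>k m. kseq (k0 k m) P X dd (rho m))"
    define sel where "sel = (\<lambda>k m w. if w \<in> Om' then (THE p. limitin (mtopology_of (X w)) (\<lambda>j. dd (kq k m j w) w) p sequentially) else dd 0 w)"
    have GclM: "closedin (Metric_space.mtopology (mspace (X w)) (mdist (X w))) (G w)" if w: "w \<in> space M" for w
    proof -
      have "G w = \<Inter> (range (\<lambda>n. F n w))" unfolding G_def by simp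
      moreover have "closedin (Metric_space.mtopology (mspace (X w)) (mdist (X w))) (\<Inter> (range (\<lambda>n. F n w)))"
        by (rule closedin_Inter) (auto simp: clF[OF w])
      ultimately show ?thesis by simp
    qed
    have selprop: "sel k m w \<in> G w \<and> limitin (mtopology_of (X w)) (\<lambda>j. dd (kq k m j w) w) (sel k m w) sequentially
       \<and> mdist (X w) (dd (k0 k m w) w) (sel k m w) \<le> 4 * rho m" if wO: "w \<in> Om'" for k m w
    proof -
      have w: "w \<in> space M" and Gne: "G w \<noteq> {}" using wO by (auto simp: Om'_def)
      have st: "P (k0 k m w) (rho m) w"
      proof (cases "P k (rho m) w")
        case True then show ?thesis by (simp add: k0_def)
      next
        case False
        have "\<exists>k. P k (rho m) w" using Pex[OF w Gne rho_pos] .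
        from LeastI_ex[OF this] False show ?thesis by (simp add: k0_def)
      qed
      have rD: "range (\<lambda>k. dd k w) \<subseteq> mspace (X w)" using ddM[OF w] by auto
      have "\<exists>p\<in>G w. limitin (Metric_space.mtopology (mspace (X w)) (mdist (X w))) (\<lambda>j. dd (kq k m j w) w) p sequentially \<and> mdist (X w) (dd (kq k m 0 w) w) p \<le> 4 * rho m"
      proof (rule Metric_space.selection[OF Metric_space_mspace_mdist, where T="G w" and D="\<lambda>k. dd k w" and kk="\<lambda>j. kq k m j w"])
        show "G w \<inter> Metric_space.mball (mspace (X w)) (mdist (X w)) (dd (kq k m 0 w) w) (rho m) \<noteq> {}"
          using st Pchar[OF w] by (simp add: kq_def mball_of_def)
        show "kq k m (Suc j) w = (LEAST ka. G w \<inter> Metric_space.mball (mspace (X w)) (mdist (X w)) (dd ka w) (rho m / 2 ^ Suc j) \<noteq> {} \<and>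
               mdist (X w) (dd ka w) (dd (kq k m j w) w) < 2 * rho m / 2 ^ j)" for j
          using Pchar[OF w] by (simp add: kq_def mball_of_def del: power_Suc)
      qed (fact prp[OF w] GclM[OF w] rD ddD[OF w] rho_pos)+
      then obtain p where p: "p \<in> G w" "limitin (mtopology_of (X w)) (\<lambda>j. dd (kq k m j w) w) p sequentially"
           "mdist (X w) (dd (k0 k m w) w) p \<le> 4 * rho m"
        by (auto simp: kq_def mtopology_of_def)
      have "(THE p. limitin (mtopology_of (X w)) (\<lambda>j. dd (kq k m j w) w) p sequentially) = p"
      proof (rule the_equality)
        show "limitin (mtopology_of (X w)) (\<lambda>j. dd (kq k m j w) w) p sequentially" by (rule p(2))
        fix p' assume "limitin (mtopology_of (X w)) (\<lambda>j. dd (kq k m j w) w) p' sequentially"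
        then show "p' = p" using p(2) Metric_space.limitin_metric_unique[OF Metric_space_mspace_mdist]
          unfolding mtopology_of_def by (metis trivial_limit_sequentially)
      qed
      then show ?thesis using p wO by (simp add: sel_def)
    qed
    have k0m: "k0 k m \<in> M \<rightarrow>\<^sub>M count_space UNIV" for k m
    proof -
      have [measurable]: "Measurable.pred M (P k' r)" for k' r using Pm .
      show ?thesis unfolding k0_def by measurable
    qed
    have dddm: "dist_fun X (dd a) (dd b) \<in> borel_measurable M" for a b using Ldist ddL by blast
    have kqm: "kq k m j \<in> M \<rightarrow>\<^sub>M count_space UNIV" for k m j
      unfolding kq_def by (rule kseq_meas[OF k0m Pm dddm])
    have selL: "sel k m \<in> L" for k m
    proof (rule Lclosed)
      show "is_section M X (sel k m)" unfolding is_section_def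
      proof
        fix w assume w: "w \<in> space M"
        show "sel k m w \<in> mspace (X w)"
        proof (cases "w \<in> Om'")
          case True then show ?thesis using selprop[OF True, of k m] Fsub[OF w, of 0] unfolding G_def by blast
        next
          case False then show ?thesis using ddM[OF w] by (simp add: sel_def)
        qed
      qed
      show "\<forall>x\<in>L. dist_fun X x (sel k m) \<in> borel_measurable M"
      proof
        fix x assume x: "x \<in> L"
        define u where "u = (\<lambda>j w. if w \<in> Om' then dist_fun X x (dd (kq k m j w)) w else dist_fun X x (dd 0) w)"
        have um: "u j \<in> borel_measurable M" for j
        proof -
          have "(\<lambda>w. (\<lambda>k' w. dist_fun X x (dd k') w) (kq k m j w) w) \<in> borel_measurable M"
            by (rule measurable_compose_countable[OF _ kqm]) (use Ldist[OF x ddL] in simp)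
          moreover have "dist_fun X x (dd 0) \<in> borel_measurable M" using Ldist[OF x ddL] .
          ultimately show ?thesis unfolding u_def
            by (intro measurable_If_set) (auto simp: Om'M)
        qed
        have conv: "(\<lambda>j. u j w) \<longlonglongrightarrow> dist_fun X x (sel k m) w" if w: "w \<in> space M" for w
        proof (cases "w \<in> Om'")
          case True
          have xw: "x w \<in> mspace (X w)" using Lsec[OF x] w unfolding is_section_def by blast
          have "(\<lambda>j. mdist (X w) (x w) (dd (kq k m j w) w)) \<longlonglongrightarrow> mdist (X w) (x w) (sel k m w)"
            by (rule Metric_space.limitin_dist[OF Metric_space_mspace_mdist _ xw])
               (use selprop[OF True, of k m] in \<open>simp add: mtopology_of_def\<close>)
          then show ?thesis using True by (simp add: u_def dist_fun_def)
        next
          case False then show ?thesis by (simp add: u_def sel_def dist_fun_def)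
        qed
        show "dist_fun X x (sel k m) \<in> borel_measurable M"
          by (rule borel_measurable_LIMSEQ_real[OF conv um])
      qed
    qed
    define Y where "Y = (\<lambda>(k,m). sel k m) ` UNIV"
    have Yc: "countable Y" unfolding Y_def by simp
    have dens: "G w \<subseteq> mtopology_of (X w) closure_of {y w |y. y \<in> Y}" if wO: "w \<in> Om'" for w
    proof
      fix q assume q: "q \<in> G w"
      have w: "w \<in> space M" using wO by (simp add: Om'_def)
      have qM: "q \<in> mspace (X w)" using q Fsub[OF w, of 0] unfolding G_def by blast
      have H: "\<forall>e>0. \<exists>y\<in>{y w |y. y \<in> Y}. y \<in> Metric_space.mball (mspace (X w)) (mdist (X w)) q e"
      proof (intro allI impI)
      fix e :: real assume e: "e > 0"
      show "\<exists>y\<in>{y w |y. y \<in> Y}. y \<in> Metric_space.mball (mspace (X w)) (mdist (X w)) q e"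
      proof -
        have "e/5 > 0" using e by simp
        then obtain m where m: "1/Suc m < e/5" using nat_approx_posE by blast
        have "q \<in> Metric_space.mtopology (mspace (X w)) (mdist (X w)) closure_of range (\<lambda>k. dd k w)"
          using ddD[OF w] qM by blast
        then have "\<exists>y\<in>range (\<lambda>k. dd k w). y \<in> Metric_space.mball (mspace (X w)) (mdist (X w)) q (rho m)"
          unfolding Metric_space.metric_closure_of[OF Metric_space_mspace_mdist] using rho_pos[of m] by simp
        then obtain k where k: "mdist (X w) q (dd k w) < rho m"
          by (auto simp: Metric_space.in_mball[OF Metric_space_mspace_mdist])
        then have "q \<in> mball_of (X w) (dd k w) (rho m)" using qM ddM[OF w] by (simp add: mdist_commute)
        then have "P k (rho m) w" using Pchar[OF w] q by blast
        then have "k0 k m w = k" by (simp add: k0_def)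
        have sp: "sel k m w \<in> G w \<and> limitin (mtopology_of (X w)) (\<lambda>j. dd (kq k m j w) w) (sel k m w) sequentially
       \<and> mdist (X w) (dd (k0 k m w) w) (sel k m w) \<le> 4 * rho m" by (rule selprop[OF wO])
        have sG: "sel k m w \<in> G w" using sp by (rule conjunct1)
        have sd: "mdist (X w) (dd k w) (sel k m w) \<le> 4 * rho m" using sp \<open>k0 k m w = k\<close> by simp
        have sM: "sel k m w \<in> mspace (X w)" using sG Fsub[OF w, of 0] unfolding G_def by blast
        have "mdist (X w) q (sel k m w) \<le> mdist (X w) q (dd k w) + mdist (X w) (dd k w) (sel k m w)"
          by (rule mdist_triangle[OF qM ddM[OF w] sM])
        moreover have "5 * rho m < e" using m by (simp add: rho_def)
        ultimately have lt: "mdist (X w) q (sel k m w) < e" using k sd by linarith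
        have "sel k m \<in> Y" unfolding Y_def by (rule image_eqI[of _ _ "(k,m)"]) auto
        then have inY: "sel k m w \<in> {y w |y. y \<in> Y}" by blast
        have "sel k m w \<in> Metric_space.mball (mspace (X w)) (mdist (X w)) q e"
          using lt qM sM by (simp add: Metric_space.in_mball[OF Metric_space_mspace_mdist])
        then show ?thesis using inY by blast
      qed
      qed
      show "q \<in> mtopology_of (X w) closure_of {y w |y. y \<in> Y}"
        unfolding mtopology_of_def Metric_space.metric_closure_of[OF Metric_space_mspace_mdist]
        by (intro CollectI conjI qM H)
    qed
    have "borel_subfield M X L G"
      unfolding borel_subfield_def Let_def Om'_def[symmetric]
    proof (intro conjI)
      show "\<forall>w\<in>space M. G w \<subseteq> mspace (X w)" using Fsub unfolding G_def by blast
      show "Om' \<in> sets M" by (rule Om'M)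
      show "\<exists>Y. countable Y \<and> (\<forall>y\<in>Y. \<exists>x\<in>L. \<forall>w\<in>Om'. y w = x w) \<and>
          (\<forall>w\<in>Om'. (\<forall>y\<in>Y. y w \<in> G w) \<and> G w \<subseteq> mtopology_of (X w) closure_of {y w |y. y \<in> Y})"
      proof (intro exI[of _ Y] conjI ballI)
        show "countable Y" by (rule Yc)
        fix y assume "y \<in> Y"
        then obtain k m where "y = sel k m" unfolding Y_def by auto
        then have "y \<in> L" using selL by simp
        then show "\<exists>x\<in>L. \<forall>w\<in>Om'. y w = x w" by blast
      next
        fix w y assume wy: "w \<in> Om'" "y \<in> Y"
        then obtain k m where "y = sel k m" unfolding Y_def by auto
        then show "y w \<in> G w" using selprop[OF wy(1), of k m] by simp
      next
        fix w assume "w \<in> Om'" then show "G w \<subseteq> mtopology_of (X w) closure_of {y w |y. y \<in> Y}" by (rule dens)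
      qed
    qed
    then show ?thesis unfolding G_def .
  qed
qed

end
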